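(* Let $s>0$ and let $\Omega\subset\mathbb R^N$ be open and bounded. There exists a constant $C>0$ depending only on $s$ and $\operatorname{diam}(\Omega)$ (and not on the probability measure $\sigma_s$) such that for all $u\in\mathcal X^s(\Omega)$, $$\|u\|_{L^2(\mathbb R^N)}^2\le C\,\mathcal E_{2s_1,s}(u,u).$$ Consequently $\mathcal E_{2s_1,s}$ is a scalar product on $\mathcal X^s(\Omega)$ inducing a norm equivalent to $(\|u\|^2_{L^2}+\mathcal E_{2s_1,s}(u,u))^{1/2}$.
   Context: $s_1=\min\{n\in\mathbb Z:n>s\}$. $\sigma_s$ is a Borel probability measure on $\mathbb S^{N-1}$; $\nu_s(U)=\int_0^\infty\int_{\mathbb S^{N-1}}\chi_U(r\theta)r^{-1-2s}\sigma_s(d\theta)\,dr$; $M_{s,\sigma_s}(e)=\int|e\cdot\theta|^{2s}\sigma_s(d\theta)$; $e_s$ a maximum point of $M_{s,\sigma_s}$; for integer $k>s$, $\frac2{c_{k,s}}=2^k\int(1-\cos(e_s\cdot y))^k\nu_s(dy)$; $\delta_mu(x,y)=\sum_{j=-m}^m(-1)^j\binom{2m}{m-j}u(x+jy)$; $\mathcal E_{2s_1,s}(u,v)=\frac{c_{2s_1,s}}2\iint_{\mathbb R^{2N}}\delta_{s_1}u(x,y)\delta_{s_1}v(x,y)\,dx\,\nu_s(dy)$. $\mathcal X^s(\Omega)$ is the closure of $C^\infty_c(\Omega)$ with respect to the norm $(\|u\|^2_{L^2(\mathbb R^N)}+\mathcal E_{2s_1,s}(u,u))^{1/2}$. *)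

theory Defs
  imports "HOL-Analysis.Analysis" "HOL-Probability.Probability"
begin

coinductive smooth_fun :: "('a::euclidean_space \<Rightarrow> real) \<Rightarrow> bool" where
  "(\<forall>x. f differentiable (at x)) \<Longrightarrow>
   (\<forall>b\<in>Basis. smooth_fun (\<lambda>x. frechet_derivative f (at x) b)) \<Longrightarrow> smooth_fun f"

definition test_fun :: "'a::euclidean_space set \<Rightarrow> ('a \<Rightarrow> real) \<Rightarrow> bool" where
  "test_fun \<Omega> \<phi> \<longleftrightarrow> smooth_fun \<phi> \<and> compact (closure {x. \<phi> x \<noteq> 0})
      \<and> closure {x. \<phi> x \<noteq> 0} \<subseteq> \<Omega>"

text \<open>s_1 = min {n integer, n > s} (for s > 0).\<close>
definition s1 :: "real \<Rightarrow> nat" where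
  "s1 s = nat (\<lfloor>s\<rfloor> + 1)"

definition sphere_prob :: "'a::euclidean_space measure \<Rightarrow> bool" where
  "sphere_prob \<sigma> \<longleftrightarrow> prob_space \<sigma> \<and> sets \<sigma> = sets (restrict_space borel (sphere 0 1))"

definition nu_s :: "real \<Rightarrow> 'a::euclidean_space measure \<Rightarrow> 'a measure" where
  "nu_s s \<sigma> = distr
     (pair_measure (density lborel (\<lambda>r. ennreal (indicator {0<..} r * r powr (- 1 - 2 * s)))) \<sigma>)
     borel (\<lambda>(r, \<theta>). r *\<^sub>R \<theta>)"

definition M_s :: "real \<Rightarrow> 'a::euclidean_space measure \<Rightarrow> 'a \<Rightarrow> real" where
  "M_s s \<sigma> e = (\<integral>\<theta>. \<bar>e \<bullet> \<theta>\<bar> powr (2 * s) \<partial>\<sigma>)"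

definition e_s :: "real \<Rightarrow> 'a::euclidean_space measure \<Rightarrow> 'a" where
  "e_s s \<sigma> = (SOME e. e \<in> sphere 0 1 \<and> (\<forall>e'\<in>sphere 0 1. M_s s \<sigma> e' \<le> M_s s \<sigma> e))"

definition c_ks :: "nat \<Rightarrow> real \<Rightarrow> 'a::euclidean_space measure \<Rightarrow> real" where
  "c_ks k s \<sigma> = 2 / (2 ^ k * enn2real (\<integral>\<^sup>+ y. ennreal ((1 - cos (e_s s \<sigma> \<bullet> y)) ^ k) \<partial>nu_s s \<sigma>))"

definition delta_m :: "nat \<Rightarrow> ('a::euclidean_space \<Rightarrow> real) \<Rightarrow> 'a \<Rightarrow> 'a \<Rightarrow> real" where
  "delta_m m u x y = (\<Sum>j\<in>{-int m..int m}.
      (-1) ^ nat \<bar>j\<bar> * real ((2 * m) choose nat (int m - j)) * u (x + real_of_int j *\<^sub>R y))"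

definition E_form :: "real \<Rightarrow> 'a::euclidean_space measure \<Rightarrow> ('a \<Rightarrow> real) \<Rightarrow> ('a \<Rightarrow> real) \<Rightarrow> real" where
  "E_form s \<sigma> u v = c_ks (2 * s1 s) s \<sigma> / 2 *
     (\<integral>z. delta_m (s1 s) u (fst z) (snd z) * delta_m (s1 s) v (fst z) (snd z) \<partial>(pair_measure lborel (nu_s s \<sigma>)))"

text \<open>The quadratic energy E_{2s_1,s}(u,u) as an extended nonnegative value
  (used to define the norm of X^s, where finiteness is not assumed a priori).\<close>
definition E_energy :: "real \<Rightarrow> 'a::euclidean_space measure \<Rightarrow> ('a \<Rightarrow> real) \<Rightarrow> ennreal" where
  "E_energy s \<sigma> u = ennreal (c_ks (2 * s1 s) s \<sigma> / 2) *
     (\<integral>\<^sup>+z. ennreal ((delta_m (s1 s) u (fst z) (snd z))\<^sup>2) \<partial>(pair_measure lborel (nu_s s \<sigma>)))"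

definition X_normsq :: "real \<Rightarrow> 'a::euclidean_space measure \<Rightarrow> ('a \<Rightarrow> real) \<Rightarrow> ennreal" where
  "X_normsq s \<sigma> u = (\<integral>\<^sup>+x. ennreal ((u x)\<^sup>2) \<partial>lborel) + E_energy s \<sigma> u"

text \<open>X^s(Omega): closure of C_c^infinity(Omega) in the above norm, i.e. the
  measurable functions of finite norm that are norm-limits of test functions.\<close>
definition X_s :: "real \<Rightarrow> 'a::euclidean_space measure \<Rightarrow> 'a set \<Rightarrow> ('a \<Rightarrow> real) set" where
  "X_s s \<sigma> \<Omega> = {u. u \<in> borel_measurable lborel \<and> X_normsq s \<sigma> u < \<infinity> \<and>
      (\<exists>\<phi>::nat \<Rightarrow> 'a \<Rightarrow> real. (\<forall>n. test_fun \<Omega> (\<phi> n)) \<and>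
         (\<lambda>n. X_normsq s \<sigma> (\<lambda>x. u x - \<phi> n x)) \<longlonglongrightarrow> 0)}"

end

theory Submission
  imports Defs
begin

definition dens :: "real \<Rightarrow> real \<Rightarrow> real" where
  "dens s r = indicator {0<..} r * r powr (- 1 - 2 * s)"

lemma dens_nonneg: "0 \<le> dens s r" by (simp add: dens_def indicator_def)

lemma sphere_prob_sets: "sphere_prob \<sigma> \<Longrightarrow> sets \<sigma> = sets (restrict_space borel (sphere (0::'a::euclidean_space) 1))"
  by (simp add: sphere_prob_def)

lemma sphere_prob_space: "sphere_prob \<sigma> \<Longrightarrow> space \<sigma> = sphere (0::'a::euclidean_space) 1"
  using sets_eq_imp_space_eq[OF sphere_prob_sets] by (simp add: space_restrict_space)

lemma meas_scale:
  assumes "sphere_prob (\<sigma>::'a::euclidean_space measure)"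
  shows "(\<lambda>(r::real, \<theta>::'a). r *\<^sub>R \<theta>) \<in> measurable (density lborel (\<lambda>r. ennreal (dens s r)) \<Otimes>\<^sub>M \<sigma>) borel"
proof -
  have "(\<lambda>(r::real, \<theta>::'a). r *\<^sub>R \<theta>) \<in> measurable (borel \<Otimes>\<^sub>M restrict_space borel (sphere 0 1)) borel"
  proof -
    have "snd \<in> measurable (borel \<Otimes>\<^sub>M restrict_space borel (sphere (0::'a) 1)) (restrict_space borel (sphere 0 1))"
      by simp
    moreover have "(\<lambda>x. x) \<in> measurable (restrict_space borel (sphere (0::'a) 1)) borel"
      by (simp add: measurable_restrict_space1)
    ultimately have h: "snd \<in> measurable (borel \<Otimes>\<^sub>M restrict_space borel (sphere (0::'a) 1)) borel"
      using measurable_comp by fastforce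
    have "fst \<in> measurable (borel \<Otimes>\<^sub>M restrict_space borel (sphere (0::'a) 1)) (borel::real measure)"
      by simp
    with h have "(\<lambda>x. fst x *\<^sub>R snd x) \<in> measurable (borel \<Otimes>\<^sub>M restrict_space borel (sphere (0::'a) 1)) borel"
      by (intro borel_measurable_scaleR) auto
    then show ?thesis by (simp add: case_prod_beta')
  qed
  moreover have "sets (density lborel (\<lambda>r. ennreal (dens s r)) \<Otimes>\<^sub>M \<sigma>) = sets (borel \<Otimes>\<^sub>M restrict_space borel (sphere (0::'a) 1))"
    by (intro sets_pair_measure_cong) (auto simp: sphere_prob_sets[OF assms])
  ultimately show ?thesis using measurable_cong_sets by blast
qed

lemma nu_nn_integral:
  assumes sp: "sphere_prob (\<sigma>::'a::euclidean_space measure)"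
    and f: "f \<in> borel_measurable borel"
  shows "(\<integral>\<^sup>+y. f y \<partial>nu_s s \<sigma>) = (\<integral>\<^sup>+r. ennreal (dens s r) * (\<integral>\<^sup>+\<theta>. f (r *\<^sub>R \<theta>) \<partial>\<sigma>) \<partial>lborel)"
proof -
  interpret P: prob_space \<sigma> using sp by (simp add: sphere_prob_def)
  have nd: "nu_s s \<sigma> = distr (density lborel (\<lambda>r. ennreal (dens s r)) \<Otimes>\<^sub>M \<sigma>) borel (\<lambda>(r, \<theta>). r *\<^sub>R \<theta>)"
    by (simp add: nu_s_def dens_def)
  have ms: "(\<lambda>(r::real, \<theta>::'a). r *\<^sub>R \<theta>) \<in> measurable (density lborel (\<lambda>r. ennreal (dens s r)) \<Otimes>\<^sub>M \<sigma>) borel"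
    by (rule meas_scale[OF sp])
  have "(\<integral>\<^sup>+y. f y \<partial>nu_s s \<sigma>) = (\<integral>\<^sup>+x. f (case x of (r, \<theta>) \<Rightarrow> r *\<^sub>R \<theta>) \<partial>(density lborel (\<lambda>r. ennreal (dens s r)) \<Otimes>\<^sub>M \<sigma>))"
    unfolding nd by (rule nn_integral_distr[OF ms]) (simp add: f)
  also have "\<dots> = (\<integral>\<^sup>+r. \<integral>\<^sup>+\<theta>. f (r *\<^sub>R \<theta>) \<partial>\<sigma> \<partial>density lborel (\<lambda>r. ennreal (dens s r)))"
    by (subst P.nn_integral_fst[symmetric]) (use measurable_comp[OF ms f] in \<open>auto simp: o_def case_prod_beta'\<close>)
  also have "\<dots> = (\<integral>\<^sup>+r. ennreal (dens s r) * (\<integral>\<^sup>+\<theta>. f (r *\<^sub>R \<theta>) \<partial>\<sigma>) \<partial>lborel)"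
  proof (rule nn_integral_density)
    show "(\<lambda>r. ennreal (dens s r)) \<in> borel_measurable lborel" unfolding dens_def by measurable
    have "(\<lambda>x. f (fst x *\<^sub>R snd x)) \<in> borel_measurable (lborel \<Otimes>\<^sub>M \<sigma>)"
      using measurable_comp[OF ms f]
      by (simp add: o_def case_prod_beta' cong: measurable_cong_sets)
    then show "(\<lambda>r. \<integral>\<^sup>+\<theta>. f (r *\<^sub>R \<theta>) \<partial>\<sigma>) \<in> borel_measurable lborel"
      using P.borel_measurable_nn_integral_fst by auto
  qed
  finally show ?thesis .
qed

lemma nu_le:
  assumes sp: "sphere_prob (\<sigma>::'a::euclidean_space measure)"
    and f: "f \<in> borel_measurable borel"
    and G: "\<And>r \<theta>. r > 0 \<Longrightarrow> norm \<theta> = 1 \<Longrightarrow> f (r *\<^sub>R \<theta>) \<le> G r"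
  shows "(\<integral>\<^sup>+y. f y \<partial>nu_s s \<sigma>) \<le> (\<integral>\<^sup>+r. ennreal (dens s r) * G r \<partial>lborel)"
proof -
  interpret P: prob_space \<sigma> using sp by (simp add: sphere_prob_def)
  show ?thesis
    unfolding nu_nn_integral[OF sp f]
  proof (rule nn_integral_mono)
    fix r :: real
    show "ennreal (dens s r) * (\<integral>\<^sup>+\<theta>. f (r *\<^sub>R \<theta>) \<partial>\<sigma>) \<le> ennreal (dens s r) * G r"
    proof (cases "r > 0")
      case True
      have "(\<integral>\<^sup>+\<theta>. f (r *\<^sub>R \<theta>) \<partial>\<sigma>) \<le> (\<integral>\<^sup>+\<theta>. G r \<partial>\<sigma>)"
        by (rule nn_integral_mono) (use G True sphere_prob_space[OF sp] in auto)
      also have "\<dots> = G r" by (simp add: P.emeasure_space_1)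
      finally show ?thesis by (rule mult_left_mono) simp
    next
      case False then show ?thesis by (simp add: dens_def)
    qed
  qed
qed

lemma nu_ge:
  assumes sp: "sphere_prob (\<sigma>::'a::euclidean_space measure)"
    and f: "f \<in> borel_measurable borel"
    and G: "\<And>r \<theta>. r > 0 \<Longrightarrow> norm \<theta> = 1 \<Longrightarrow> G r \<le> f (r *\<^sub>R \<theta>)"
  shows "(\<integral>\<^sup>+r. ennreal (dens s r) * G r \<partial>lborel) \<le> (\<integral>\<^sup>+y. f y \<partial>nu_s s \<sigma>)"
proof -
  interpret P: prob_space \<sigma> using sp by (simp add: sphere_prob_def)
  show ?thesis
    unfolding nu_nn_integral[OF sp f]
  proof (rule nn_integral_mono)
    fix r :: real
    show "ennreal (dens s r) * G r \<le> ennreal (dens s r) * (\<integral>\<^sup>+\<theta>. f (r *\<^sub>R \<theta>) \<partial>\<sigma>)"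
    proof (cases "r > 0")
      case True
      have "G r = (\<integral>\<^sup>+\<theta>. G r \<partial>\<sigma>)" by (simp add: P.emeasure_space_1)
      also have "\<dots> \<le> (\<integral>\<^sup>+\<theta>. f (r *\<^sub>R \<theta>) \<partial>\<sigma>)"
        by (rule nn_integral_mono) (use G True sphere_prob_space[OF sp] in auto)
      finally show ?thesis by (rule mult_left_mono) simp
    next
      case False then show ?thesis by (simp add: dens_def)
    qed
  qed
qed

lemma tail_integral:
  assumes s: "s > 0" and a: "a > 0"
  shows "(\<integral>\<^sup>+r. ennreal (dens s r * indicator {a..} r) \<partial>lborel) = ennreal (a powr (- 2 * s) / (2 * s))"
proof -
  have eq: "dens s r * indicator {a..} r = (if r \<in> {a..} then r powr (- 1 - 2 * s) else 0)" for r
    using a by (auto simp: dens_def indicator_def)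
  have "((\<lambda>r. r powr (- 1 - 2 * s)) has_integral - (a powr (- 1 - 2 * s + 1)) / (- 1 - 2 * s + 1)) {a..}"
    by (rule has_integral_powr_to_inf) (use s a in auto)
  then have "((\<lambda>r. dens s r * indicator {a..} r) has_integral a powr (- 2 * s) / (2 * s)) UNIV"
    unfolding eq has_integral_restrict_UNIV by (simp add: field_simps)
  then have "integral\<^sup>N lborel (\<lambda>r. dens s r * indicator {a..} r) = a powr (- 2 * s) / (2 * s)"
    by (rule nn_integral_has_integral_lborel[rotated 2]) (auto simp: dens_def indicator_def)
  then show ?thesis by simp
qed

lemma K_integral:
  fixes q :: nat and s :: real
  assumes s: "s > 0" and q: "real q > s"
  shows "(\<integral>\<^sup>+r. ennreal (dens s r * (if r \<le> 1 then r ^ (2 * q) else 2 ^ q)) \<partial>lborel)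
          \<le> ennreal (1 / (2 * real q - 2 * s) + 2 ^ q * (1 powr (- 2 * s) / (2 * s)))"
proof -
  have le: "dens s r * (if r \<le> 1 then r ^ (2 * q) else 2 ^ q) \<le>
     (if r \<in> {0..1} then r powr (2 * real q - 1 - 2 * s) else 0) + 2 ^ q * (dens s r * indicator {1..} r)" for r
  proof (cases "r > 0")
    case True
    show ?thesis
    proof (cases "r \<le> 1")
      case True': True
      have "r ^ (2 * q) * r powr (- 1 - 2 * s) = r powr (2 * real q - 1 - 2 * s)"
        using True by (simp add: powr_realpow[symmetric] powr_add[symmetric] algebra_simps)
      then show ?thesis using True True' by (auto simp: dens_def indicator_def mult.commute)
    next
      case False
      then show ?thesis using True by (auto simp: dens_def indicator_def mult.commute)
    qed
  next
    case False then show ?thesis by (auto simp: dens_def indicator_def)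
  qed
  have i1: "((\<lambda>r. r powr (2 * real q - 1 - 2 * s)) has_integral 1 powr (2 * real q - 1 - 2 * s + 1) / (2 * real q - 1 - 2 * s + 1)) {0..1}"
    by (rule has_integral_powr_from_0) (use q in auto)
  then have i1': "((\<lambda>r. if r \<in> {0..1} then r powr (2 * real q - 1 - 2 * s) else 0) has_integral 1 / (2 * real q - 2 * s)) UNIV"
    unfolding has_integral_restrict_UNIV by simp
  have n1: "(\<integral>\<^sup>+r. ennreal (if r \<in> {0..1} then r powr (2 * real q - 1 - 2 * s) else 0) \<partial>lborel) = 1 / (2 * real q - 2 * s)"
    by (rule nn_integral_has_integral_lborel[OF _ _ i1']) auto
  have "(\<integral>\<^sup>+r. ennreal (dens s r * (if r \<le> 1 then r ^ (2 * q) else 2 ^ q)) \<partial>lborel) \<le>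
        (\<integral>\<^sup>+r. ennreal (if r \<in> {0..1} then r powr (2 * real q - 1 - 2 * s) else 0) + ennreal (2 ^ q) * ennreal (dens s r * indicator {1..} r) \<partial>lborel)"
    by (rule nn_integral_mono) (use le in \<open>auto simp: ennreal_mult'[symmetric] dens_nonneg intro!: ennreal_leI simp flip: ennreal_plus\<close>)
  also have "\<dots> = ennreal (1 / (2 * real q - 2 * s)) + ennreal (2 ^ q) * ennreal (1 powr (- 2 * s) / (2 * s))"
  proof -
    have m: "(\<lambda>r. ennreal (dens s r * indicator {1..} r)) \<in> borel_measurable lborel"
      unfolding dens_def by measurable
    show ?thesis
    proof -
      have a: "(\<integral>\<^sup>+r. ennreal (dens s r * indicator {1..} r) \<partial>lborel) = ennreal (1 powr (- 2 * s) / (2 * s))"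
        by (rule tail_integral[OF s]) simp
      have mA: "(\<lambda>r. ennreal (if r \<in> {0..1} then r powr (2 * real q - 1 - 2 * s) else 0)) \<in> borel_measurable lborel"
        by (intro measurable_compose[OF _ measurable_ennreal] borel_measurable_continuous_on_if continuous_intros) auto
      have m2: "(\<lambda>r. ennreal (2 ^ q) * ennreal (dens s r * indicator {1..} r)) \<in> borel_measurable lborel"
        using m by (rule borel_measurable_times_ennreal[OF borel_measurable_const])
      have e1: "(\<integral>\<^sup>+r. ennreal (if r \<in> {0..1} then r powr (2 * real q - 1 - 2 * s) else 0) + ennreal (2 ^ q) * ennreal (dens s r * indicator {1..} r) \<partial>lborel)
         = (\<integral>\<^sup>+r. ennreal (if r \<in> {0..1} then r powr (2 * real q - 1 - 2 * s) else 0) \<partial>lborel) + (\<integral>\<^sup>+r. ennreal (2 ^ q) * ennreal (dens s r * indicator {1..} r) \<partial>lborel)"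
        by (rule nn_integral_add[OF mA m2])
      have e2: "(\<integral>\<^sup>+r. ennreal (2 ^ q) * ennreal (dens s r * indicator {1..} r) \<partial>lborel) = ennreal (2 ^ q) * (\<integral>\<^sup>+r. ennreal (dens s r * indicator {1..} r) \<partial>lborel)"
        by (rule nn_integral_cmult[OF m])
      show ?thesis unfolding e1 e2 n1 a by (rule refl)
    qed
  qed
  also have "\<dots> = ennreal (1 / (2 * real q - 2 * s) + 2 ^ q * (1 powr (- 2 * s) / (2 * s)))"
    using q s by (simp add: ennreal_mult[symmetric] ennreal_plus[symmetric] del: ennreal_plus)
  finally show ?thesis .
qed


lemma one_minus_cos_le: "1 - cos (x::real) \<le> x\<^sup>2 / 2"
proof -
  have "cos x = 1 - 2 * sin (x/2) ^ 2" using cos_double_sin[of "x/2"] by simp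
  moreover have "sin (x/2) ^ 2 \<le> (x/2)^2"
    using abs_sin_x_le_abs_x[of "x/2"] by (metis abs_ge_zero power2_abs power_mono)
  ultimately show ?thesis by (simp add: power_divide)
qed

lemma nu_space: "space (nu_s s \<sigma>) = UNIV" by (simp add: nu_s_def)
lemma nu_sets: "sets (nu_s s \<sigma>) = sets borel" by (simp add: nu_s_def)

lemma nu_tail_le:
  assumes s: "s > 0" and sp: "sphere_prob (\<sigma>::'a::euclidean_space measure)" and a: "a > 0"
  shows "emeasure (nu_s s \<sigma>) ({y. a \<le> norm y} \<union> {0}) \<le> ennreal (a powr (- 2 * s) / (2 * s))"
proof -
  have S: "({y::'a. a \<le> norm y} \<union> {0}) \<in> sets borel" by measurable
  have "emeasure (nu_s s \<sigma>) ({y. a \<le> norm y} \<union> {0}) = (\<integral>\<^sup>+y. indicator ({y::'a. a \<le> norm y} \<union> {0}) y \<partial>nu_s s \<sigma>)"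
    using S by (simp add: nu_sets)
  also have "\<dots> \<le> (\<integral>\<^sup>+r. ennreal (dens s r) * indicator {a..} r \<partial>lborel)"
    by (rule nu_le[OF sp]) (use S a in \<open>auto simp: indicator_def\<close>)
  also have "\<dots> = (\<integral>\<^sup>+r. ennreal (dens s r * indicator {a..} r) \<partial>lborel)"
    by (intro nn_integral_cong) (simp add: indicator_def)
  also have "\<dots> = ennreal (a powr (- 2 * s) / (2 * s))" by (rule tail_integral[OF s a])
  finally show ?thesis .
qed

lemma nu_tail_ge:
  assumes s: "s > 0" and sp: "sphere_prob (\<sigma>::'a::euclidean_space measure)" and a: "a > 0"
  shows "ennreal (a powr (- 2 * s) / (2 * s)) \<le> emeasure (nu_s s \<sigma>) {y. a \<le> norm y}"
proof -
  have S: "{y::'a. a \<le> norm y} \<in> sets borel" by measurable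
  have "ennreal (a powr (- 2 * s) / (2 * s)) = (\<integral>\<^sup>+r. ennreal (dens s r * indicator {a..} r) \<partial>lborel)"
    by (rule tail_integral[OF s a, symmetric])
  also have "\<dots> = (\<integral>\<^sup>+r. ennreal (dens s r) * indicator {a..} r \<partial>lborel)"
    by (intro nn_integral_cong) (simp add: indicator_def)
  also have "\<dots> \<le> (\<integral>\<^sup>+y. indicator {y::'a. a \<le> norm y} y \<partial>nu_s s \<sigma>)"
    by (rule nu_ge[OF sp]) (use S a in \<open>auto simp: indicator_def\<close>)
  also have "\<dots> = emeasure (nu_s s \<sigma>) {y. a \<le> norm y}"
    using S by (simp add: nu_sets)
  finally show ?thesis .
qed

lemma nu_sigma_finite:
  assumes s: "s > 0" and sp: "sphere_prob (\<sigma>::'a::euclidean_space measure)"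
  shows "sigma_finite_measure (nu_s s \<sigma>)"
proof
  define A where "A n = {y::'a. 1 / real (Suc n) \<le> norm y} \<union> {0}" for n
  show "\<exists>A. countable A \<and> A \<subseteq> sets (nu_s s \<sigma>) \<and> \<Union> A = space (nu_s s \<sigma>) \<and> (\<forall>a\<in>A. emeasure (nu_s s \<sigma>) a \<noteq> \<infinity>)"
  proof (intro exI conjI)
    show "countable (range A)" by simp
    show "range A \<subseteq> sets (nu_s s \<sigma>)" unfolding A_def nu_sets by auto
    show "\<Union> (range A) = space (nu_s s \<sigma>)"
    proof -
      have "y \<in> \<Union> (range A)" for y
      proof (cases "y = 0")
        case False
        then have "norm y > 0" by simp
        then obtain n where "inverse (real (Suc n)) < norm y" using reals_Archimedean by blast
        then show ?thesis unfolding A_def by (auto simp: field_simps intro!: exI[of _ n])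
      qed (auto simp: A_def)
      then show ?thesis by (auto simp: nu_space)
    qed
    show "\<forall>a\<in>range A. emeasure (nu_s s \<sigma>) a \<noteq> \<infinity>"
    proof
      fix a assume "a \<in> range A"
      then obtain n where "a = A n" by auto
      have "emeasure (nu_s s \<sigma>) (A n) \<le> ennreal ((1 / real (Suc n)) powr (- 2 * s) / (2 * s))"
        unfolding A_def by (rule nu_tail_le[OF s sp]) simp
      then show "emeasure (nu_s s \<sigma>) a \<noteq> \<infinity>" using \<open>a = A n\<close>
        by (metis ennreal_neq_top infinity_ennreal_def neq_top_trans)
    qed
  qed
qed


lemma meas_sigma:
  assumes sp: "sphere_prob (\<sigma>::'a::euclidean_space measure)" and g: "g \<in> borel_measurable (borel::'a measure)"
  shows "g \<in> borel_measurable \<sigma>"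
proof -
  have "g \<in> borel_measurable (restrict_space borel (sphere (0::'a) 1))"
    using g by (rule measurable_restrict_space1)
  then show ?thesis using sphere_prob_sets[OF sp] measurable_cong_sets by blast
qed

lemma inner_sphere_le: "norm (e::'a::euclidean_space) = 1 \<Longrightarrow> norm \<theta> = 1 \<Longrightarrow> \<bar>e \<bullet> \<theta>\<bar> \<le> 1"
  using Cauchy_Schwarz_ineq2[of e \<theta>] by simp

lemma powr_le1: fixes t s :: real shows "abs t \<le> 1 \<Longrightarrow> s > 0 \<Longrightarrow> abs t powr (2 * s) \<le> 1"
  by (metis abs_ge_zero powr_mono2 powr_one_eq_one mult_nonneg_nonneg less_imp_le zero_le_numeral)

lemma M_integrable:
  assumes sp: "sphere_prob (\<sigma>::'a::euclidean_space measure)" and s: "s > 0" and e: "norm e \<le> 1"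
  shows "integrable \<sigma> (\<lambda>\<theta>. \<bar>e \<bullet> \<theta>\<bar> powr (2 * s))"
proof -
  interpret P: prob_space \<sigma> using sp by (simp add: sphere_prob_def)
  have m: "(\<lambda>\<theta>. \<bar>e \<bullet> \<theta>\<bar> powr (2 * s)) \<in> borel_measurable \<sigma>"
    by (rule meas_sigma[OF sp]) measurable
  show ?thesis
  proof (rule P.integrable_const_bound[where B=1])
    show "AE x in \<sigma>. norm (\<bar>e \<bullet> x\<bar> powr (2 * s)) \<le> 1"
    proof (rule AE_I2)
      fix x assume "x \<in> space \<sigma>"
      then have "norm x = 1" using sphere_prob_space[OF sp] by auto
      then have "\<bar>e \<bullet> x\<bar> \<le> 1" using Cauchy_Schwarz_ineq2[of e x] e by (simp add: order_trans)
      then show "norm (\<bar>e \<bullet> x\<bar> powr (2 * s)) \<le> 1"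
        using s powr_le1 by auto
    qed
  qed (rule m)
qed

lemma M_cont:
  assumes sp: "sphere_prob (\<sigma>::'a::euclidean_space measure)" and s: "s > 0"
  shows "continuous_on (sphere 0 1) (M_s s \<sigma>)"
proof (rule continuous_on_sequentiallyI)
  interpret P: prob_space \<sigma> using sp by (simp add: sphere_prob_def)
  fix u :: "nat \<Rightarrow> 'a" and a assume u: "\<forall>n. u n \<in> sphere 0 1" and a: "a \<in> sphere 0 1" and lim: "u \<longlonglongrightarrow> a"
  show "(\<lambda>n. M_s s \<sigma> (u n)) \<longlonglongrightarrow> M_s s \<sigma> a"
    unfolding M_s_def
  proof (rule integral_dominated_convergence[where w="\<lambda>_. 1"])
    show "(\<lambda>\<theta>. \<bar>a \<bullet> \<theta>\<bar> powr (2 * s)) \<in> borel_measurable \<sigma>"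
      by (rule meas_sigma[OF sp]) measurable
    show "(\<lambda>\<theta>. \<bar>u i \<bullet> \<theta>\<bar> powr (2 * s)) \<in> borel_measurable \<sigma>" for i
      by (rule meas_sigma[OF sp]) measurable
    show "integrable \<sigma> (\<lambda>_. 1::real)" by simp
    show "AE x in \<sigma>. (\<lambda>i. \<bar>u i \<bullet> x\<bar> powr (2 * s)) \<longlonglongrightarrow> \<bar>a \<bullet> x\<bar> powr (2 * s)"
    proof (rule AE_I2)
      fix x
      have "(\<lambda>i. \<bar>u i \<bullet> x\<bar>) \<longlonglongrightarrow> \<bar>a \<bullet> x\<bar>"
        by (intro tendsto_intros lim)
      then show "(\<lambda>i. \<bar>u i \<bullet> x\<bar> powr (2 * s)) \<longlonglongrightarrow> \<bar>a \<bullet> x\<bar> powr (2 * s)"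
        using s by (intro tendsto_powr') auto
    qed
    show "AE x in \<sigma>. norm (\<bar>u i \<bullet> x\<bar> powr (2 * s)) \<le> 1" for i
    proof (rule AE_I2)
      fix x assume "x \<in> space \<sigma>"
      then have "norm x = 1" using sphere_prob_space[OF sp] by auto
      then have "\<bar>u i \<bullet> x\<bar> \<le> 1" using inner_sphere_le[of "u i" x] u by auto
      then show "norm (\<bar>u i \<bullet> x\<bar> powr (2 * s)) \<le> 1"
        using s powr_le1 by auto
    qed
  qed
qed

lemma e_s_prop:
  assumes sp: "sphere_prob (\<sigma>::'a::euclidean_space measure)" and s: "s > 0"
  shows "e_s s \<sigma> \<in> sphere 0 1 \<and> (\<forall>e'\<in>sphere 0 1. M_s s \<sigma> e' \<le> M_s s \<sigma> (e_s s \<sigma>))"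
proof -
  obtain b :: 'a where b: "b \<in> Basis" using nonempty_Basis by blast
  then have ne: "sphere (0::'a) 1 \<noteq> {}" by (auto intro!: exI[of _ b])
  have "\<exists>e\<in>sphere 0 1. \<forall>e'\<in>sphere 0 1. M_s s \<sigma> e' \<le> M_s s \<sigma> e"
    by (rule continuous_attains_sup[OF compact_sphere ne M_cont[OF sp s]])
  then have ex: "\<exists>e. e \<in> sphere 0 1 \<and> (\<forall>e'\<in>sphere 0 1. M_s s \<sigma> e' \<le> M_s s \<sigma> e)" by blast
  show ?thesis unfolding e_s_def by (rule someI_ex[OF ex])
qed

lemma e_s_nonzero:
  assumes sp: "sphere_prob (\<sigma>::'a::euclidean_space measure)" and s: "s > 0"
  shows "\<not> (AE \<theta> in \<sigma>. e_s s \<sigma> \<bullet> \<theta> = 0)"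
proof
  interpret P: prob_space \<sigma> using sp by (simp add: sphere_prob_def)
  assume ae: "AE \<theta> in \<sigma>. e_s s \<sigma> \<bullet> \<theta> = 0"
  have "M_s s \<sigma> (e_s s \<sigma>) = 0"
    unfolding M_s_def using ae s by (subst integral_cong_AE[where g="\<lambda>_. 0"]) (auto intro!: meas_sigma[OF sp])
  then have Mb: "M_s s \<sigma> b \<le> 0" if "b \<in> Basis" for b
    using e_s_prop[OF sp s] that by auto
  have "AE \<theta> in \<sigma>. \<bar>b \<bullet> \<theta>\<bar> powr (2 * s) = 0" if b: "b \<in> Basis" for b
  proof -
    have nb: "norm b \<le> 1" using b by simp
    have "M_s s \<sigma> b \<ge> 0" unfolding M_s_def by (intro integral_nonneg_AE) auto
    with Mb[OF b] have "integral\<^sup>L \<sigma> (\<lambda>\<theta>. \<bar>b \<bullet> \<theta>\<bar> powr (2 * s)) = 0" unfolding M_s_def by simp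
    then show ?thesis
      using integral_nonneg_eq_0_iff_AE[OF M_integrable[OF sp s nb]] by simp
  qed
  then have "AE \<theta> in \<sigma>. \<forall>b\<in>Basis. \<bar>b \<bullet> \<theta>\<bar> powr (2 * s) = 0"
    by (subst AE_finite_all) auto
  moreover have "AE \<theta> in \<sigma>. norm \<theta> = 1"
    by (rule AE_I2) (use sphere_prob_space[OF sp] in auto)
  ultimately have "AE \<theta> in \<sigma>. False"
  proof eventually_elim
    fix \<theta> :: 'a assume h: "\<forall>b\<in>Basis. \<bar>b \<bullet> \<theta>\<bar> powr (2 * s) = 0" "norm \<theta> = 1"
    then have "\<forall>b\<in>Basis. \<theta> \<bullet> b = 0" by (simp add: inner_commute)
    then have "\<theta> = 0" using euclidean_all_zero_iff by blast
    with h show False by simp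
  qed
  then show False by (simp add: P.AE_False)
qed


definition Kc :: "nat \<Rightarrow> real \<Rightarrow> real" where
  "Kc q s = 1 / (2 * real q - 2 * s) + 2 ^ q * (1 powr (- 2 * s) / (2 * s))"

lemma Kc_pos: "s > 0 \<Longrightarrow> real q > s \<Longrightarrow> Kc q s > 0"
  unfolding Kc_def by (intro add_pos_pos) auto

lemma cos_bound:
  fixes r t :: real and q :: nat
  assumes r: "r > 0" and t: "\<bar>t\<bar> \<le> 1"
  shows "(1 - cos (r * t)) ^ q \<le> (if r \<le> 1 then r ^ (2 * q) else 2 ^ q)"
proof (cases "r \<le> 1")
  case True
  have "1 - cos (r * t) \<le> (r * t)\<^sup>2 / 2" by (rule one_minus_cos_le)
  also have "\<dots> \<le> r\<^sup>2"
  proof -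
    have "t\<^sup>2 \<le> 1" using t by (simp add: abs_square_le_1)
    then have "r\<^sup>2 * t\<^sup>2 \<le> r\<^sup>2" by (simp add: mult_left_le)
    moreover have "0 \<le> r\<^sup>2" by simp
    ultimately show ?thesis by (simp add: power_mult_distrib, linarith)
  qed
  finally have "(1 - cos (r * t)) ^ q \<le> (r\<^sup>2) ^ q"
    by (intro power_mono) (auto simp: algebra_simps)
  then show ?thesis using True by (simp add: power_mult[symmetric] mult.commute)
next
  case False
  have c1: "1 - cos (r * t) \<le> 2" "0 \<le> 1 - cos (r * t)"
    using cos_ge_minus_one[of "r * t"] cos_le_one[of "r * t"] by linarith+
  have "(1 - cos (r * t)) ^ q \<le> 2 ^ q"
    using c1 by (intro power_mono) auto
  then show ?thesis using False by simp
qed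

lemma s1_gt: "s > 0 \<Longrightarrow> real (s1 s) > s"
  unfolding s1_def by linarith

lemma I_le:
  assumes sp: "sphere_prob (\<sigma>::'a::euclidean_space measure)" and s: "s > 0"
    and e: "norm e = 1" and q: "real q > s"
  shows "(\<integral>\<^sup>+y. ennreal ((1 - cos (e \<bullet> y)) ^ q) \<partial>nu_s s \<sigma>) \<le> ennreal (Kc q s)"
proof -
  have "(\<integral>\<^sup>+y. ennreal ((1 - cos (e \<bullet> y)) ^ q) \<partial>nu_s s \<sigma>)
     \<le> (\<integral>\<^sup>+r. ennreal (dens s r) * ennreal (if r \<le> 1 then r ^ (2 * q) else 2 ^ q) \<partial>lborel)"
  proof (rule nu_le[OF sp])
    show "(\<lambda>y. ennreal ((1 - cos (e \<bullet> y)) ^ q)) \<in> borel_measurable borel" by measurable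
    fix r :: real and \<theta> :: 'a assume r: "r > 0" and th: "norm \<theta> = 1"
    have "\<bar>e \<bullet> \<theta>\<bar> \<le> 1" by (rule inner_sphere_le[OF e th])
    from cos_bound[OF r this, of q]
    show "ennreal ((1 - cos (e \<bullet> r *\<^sub>R \<theta>)) ^ q) \<le> ennreal (if r \<le> 1 then r ^ (2 * q) else 2 ^ q)"
      by (intro ennreal_leI) simp
  qed
  also have "\<dots> = (\<integral>\<^sup>+r. ennreal (dens s r * (if r \<le> 1 then r ^ (2 * q) else 2 ^ q)) \<partial>lborel)"
    by (intro nn_integral_cong) (simp add: ennreal_mult'' dens_nonneg)
  also have "\<dots> \<le> ennreal (Kc q s)" unfolding Kc_def by (rule K_integral[OF s q])
  finally show ?thesis .
qed

lemma J_pos: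
  fixes t s :: real and q :: nat
  assumes t: "t \<noteq> 0"
  shows "(\<integral>\<^sup>+r. ennreal (dens s r * (1 - cos (r * t)) ^ q) \<partial>lborel) \<noteq> 0"
proof
  assume "(\<integral>\<^sup>+r. ennreal (dens s r * (1 - cos (r * t)) ^ q) \<partial>lborel) = 0"
  then have "AE r in lborel. ennreal (dens s r * (1 - cos (r * t)) ^ q) = 0"
    by (subst (asm) nn_integral_0_iff_AE) (auto simp: dens_def)
  then obtain N where N: "{r \<in> space lborel. \<not> ennreal (dens s r * (1 - cos (r * t)) ^ q) = 0} \<subseteq> N"
      "emeasure lborel N = 0" "N \<in> sets lborel"
    by (rule AE_E)
  define a where "a = pi / (2 * \<bar>t\<bar>)"
  define b where "b = pi / \<bar>t\<bar>"
  have ab: "0 < a" "a < b" using t pi_gt_zero unfolding a_def b_def by (auto simp: field_simps)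
  have "{a..b} \<subseteq> N"
  proof
    fix r assume r: "r \<in> {a..b}"
    then have r0: "r > 0" using ab by auto
    have "\<bar>r * t\<bar> = r * \<bar>t\<bar>" using r0 by (simp add: abs_mult)
    moreover have "pi / 2 \<le> r * \<bar>t\<bar>" "r * \<bar>t\<bar> \<le> pi"
      using r t unfolding a_def b_def by (auto simp: field_simps)
    ultimately have "cos \<bar>r * t\<bar> \<le> cos (pi / 2)"
      by (intro cos_monotone_0_pi_le) auto
    then have "cos (r * t) \<le> 0" by simp
    then have "(1 - cos (r * t)) ^ q > 0" by simp
    moreover have "dens s r > 0" using r0 by (simp add: dens_def)
    ultimately have "dens s r * (1 - cos (r * t)) ^ q > 0" by simp
    then have "ennreal (dens s r * (1 - cos (r * t)) ^ q) \<noteq> 0" by (simp only: ennreal_eq_0_iff)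
    then show "r \<in> N" using N(1) by auto
  qed
  then have "emeasure lborel {a..b} \<le> emeasure lborel N" by (intro emeasure_mono N(3))
  then show False using N(2) ab by simp
qed


lemma I_pos:
  assumes sp: "sphere_prob (\<sigma>::'a::euclidean_space measure)" and s: "s > 0"
  shows "(\<integral>\<^sup>+y. ennreal ((1 - cos (e_s s \<sigma> \<bullet> y)) ^ q) \<partial>nu_s s \<sigma>) \<noteq> 0"
proof
  interpret P: prob_space \<sigma> using sp by (simp add: sphere_prob_def)
  interpret PS: pair_sigma_finite lborel \<sigma>
    by (intro pair_sigma_finite.intro lborel.sigma_finite_measure_axioms prob_space_imp_sigma_finite) (simp add: P.prob_space_axioms)
  define e where "e = e_s s \<sigma>"
  have mid[measurable]: "(\<lambda>\<theta>. \<theta>) \<in> borel_measurable \<sigma>"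
    by (rule meas_sigma[OF sp]) simp
  have me[measurable]: "(\<lambda>\<theta>. e \<bullet> \<theta>) \<in> borel_measurable \<sigma>"
    by (rule meas_sigma[OF sp]) measurable
  define H where "H x = ennreal (dens s (fst x) * (1 - cos (fst x * (e \<bullet> snd x))) ^ q)" for x
  have mH: "H \<in> borel_measurable (lborel \<Otimes>\<^sub>M \<sigma>)"
    unfolding H_def dens_def by measurable
  assume "(\<integral>\<^sup>+y. ennreal ((1 - cos (e_s s \<sigma> \<bullet> y)) ^ q) \<partial>nu_s s \<sigma>) = 0"
  then have "(\<integral>\<^sup>+r. ennreal (dens s r) * (\<integral>\<^sup>+\<theta>. ennreal ((1 - cos (e \<bullet> (r *\<^sub>R \<theta>))) ^ q) \<partial>\<sigma>) \<partial>lborel) = 0"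
    by (subst (asm) nu_nn_integral[OF sp]) (auto simp: e_def)
  moreover have "(\<integral>\<^sup>+r. ennreal (dens s r) * (\<integral>\<^sup>+\<theta>. ennreal ((1 - cos (e \<bullet> (r *\<^sub>R \<theta>))) ^ q) \<partial>\<sigma>) \<partial>lborel)
      = (\<integral>\<^sup>+r. \<integral>\<^sup>+\<theta>. H (r, \<theta>) \<partial>\<sigma> \<partial>lborel)"
  proof (rule nn_integral_cong)
    fix r :: real
    have "(\<integral>\<^sup>+\<theta>. H (r, \<theta>) \<partial>\<sigma>) = (\<integral>\<^sup>+\<theta>. ennreal (dens s r) * ennreal ((1 - cos (e \<bullet> (r *\<^sub>R \<theta>))) ^ q) \<partial>\<sigma>)"
      by (intro nn_integral_cong) (simp add: H_def ennreal_mult'' dens_nonneg)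
    also have "\<dots> = ennreal (dens s r) * (\<integral>\<^sup>+\<theta>. ennreal ((1 - cos (e \<bullet> (r *\<^sub>R \<theta>))) ^ q) \<partial>\<sigma>)"
      by (rule nn_integral_cmult) measurable
    finally show "ennreal (dens s r) * (\<integral>\<^sup>+\<theta>. ennreal ((1 - cos (e \<bullet> (r *\<^sub>R \<theta>))) ^ q) \<partial>\<sigma>) = (\<integral>\<^sup>+\<theta>. H (r, \<theta>) \<partial>\<sigma>)" by simp
  qed
  moreover have "(\<integral>\<^sup>+r. \<integral>\<^sup>+\<theta>. H (r, \<theta>) \<partial>\<sigma> \<partial>lborel) = (\<integral>\<^sup>+\<theta>. \<integral>\<^sup>+r. H (r, \<theta>) \<partial>lborel \<partial>\<sigma>)"
    using P.nn_integral_fst[OF mH] PS.nn_integral_snd[OF mH] by simp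
  ultimately have "(\<integral>\<^sup>+\<theta>. \<integral>\<^sup>+r. H (r, \<theta>) \<partial>lborel \<partial>\<sigma>) = 0" by simp
  then have "AE \<theta> in \<sigma>. (\<integral>\<^sup>+r. H (r, \<theta>) \<partial>lborel) = 0"
    by (subst (asm) nn_integral_0_iff_AE) (use mH in \<open>auto intro!: lborel.borel_measurable_nn_integral_fst[of "\<lambda>(x,y). H (y,x)", simplified] measurable_pair_swap\<close>)
  then have "AE \<theta> in \<sigma>. e \<bullet> \<theta> = 0"
  proof eventually_elim
    fix \<theta> assume "(\<integral>\<^sup>+r. H (r, \<theta>) \<partial>lborel) = 0"
    then show "e \<bullet> \<theta> = 0" using J_pos[of "e \<bullet> \<theta>" s q] unfolding H_def by auto
  qed
  then show False using e_s_nonzero[OF sp s] unfolding e_def by simp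
qed


lemma AE_lborel_shift:
  fixes c :: "'a::euclidean_space"
  assumes "AE z in lborel. P z"
  shows "AE x in lborel. P (x + c)"
proof -
  from assms obtain N where N: "{z \<in> space lborel. \<not> P z} \<subseteq> N" "emeasure lborel N = 0" "N \<in> sets lborel"
    by (rule AE_E)
  have mc: "(+) c \<in> measurable lborel (borel::'a measure)" by simp
  have "emeasure lborel ((+) c -` N \<inter> space lborel) = emeasure (distr lborel borel ((+) c)) N"
    using N(3) by (subst emeasure_distr[OF mc]) auto
  also have "\<dots> = 0" using N(2) by (simp add: lborel_distr_plus)
  finally have e0: "emeasure lborel ((+) c -` N \<inter> space lborel) = 0" .
  moreover have "((+) c -` N \<inter> space lborel) \<in> sets lborel"
    using measurable_sets[OF mc, of N] N(3) by simp
  ultimately have "((+) c -` N \<inter> space lborel) \<in> null_sets lborel"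
    using e0 by (intro null_setsI) auto
  moreover have "{x \<in> space lborel. \<not> P (x + c)} \<subseteq> (+) c -` N \<inter> space lborel"
    using N(1) by (auto simp: add.commute)
  ultimately show ?thesis by (rule AE_I')
qed

lemma delta_meas:
  assumes u: "u \<in> borel_measurable (borel::'a::euclidean_space measure)"
  shows "(\<lambda>z. delta_m m u (fst z) (snd z)) \<in> borel_measurable (lborel \<Otimes>\<^sub>M nu_s s \<sigma>)"
proof -
  have "(\<lambda>z::'a \<times> 'a. delta_m m u (fst z) (snd z)) \<in> borel_measurable borel"
    unfolding delta_m_def
  proof (intro borel_measurable_sum borel_measurable_times borel_measurable_const)
    fix j :: int
    have "(\<lambda>z::'a \<times> 'a. fst z + real_of_int j *\<^sub>R snd z) \<in> borel_measurable borel"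
      by (intro borel_measurable_continuous_onI continuous_intros)
    then show "(\<lambda>z::'a \<times> 'a. u (fst z + real_of_int j *\<^sub>R snd z)) \<in> borel_measurable borel"
      by (rule measurable_compose[OF _ u])
  qed
  moreover have "sets (lborel \<Otimes>\<^sub>M nu_s s \<sigma>) = sets (borel \<Otimes>\<^sub>M (borel::'a measure))"
    by (intro sets_pair_measure_cong) (auto simp: nu_sets)
  ultimately show ?thesis
    unfolding borel_prod[symmetric] using measurable_cong_sets[OF _ refl] by blast
qed

lemma delta_single:
  fixes u :: "'a::euclidean_space \<Rightarrow> real"
  assumes z: "\<And>j. j \<in> {-int m..int m} \<Longrightarrow> j \<noteq> 0 \<Longrightarrow> u (x + real_of_int j *\<^sub>R y) = 0"
  shows "delta_m m u x y = real ((2 * m) choose m) * u x"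
proof -
  have "delta_m m u x y = (\<Sum>j\<in>{0::int}. (-1) ^ nat \<bar>j\<bar> * real ((2 * m) choose nat (int m - j)) * u (x + real_of_int j *\<^sub>R y))"
    unfolding delta_m_def by (rule sum.mono_neutral_right) (auto simp: z)
  then show ?thesis by simp
qed


lemma test_fun_zero: "test_fun \<Omega> \<phi> \<Longrightarrow> x \<notin> \<Omega> \<Longrightarrow> \<phi> x = 0"
proof -
  assume t: "test_fun \<Omega> \<phi>" and x: "x \<notin> \<Omega>"
  have "closure {x. \<phi> x \<noteq> 0} \<subseteq> \<Omega>" using t unfolding test_fun_def by simp
  then have "{x. \<phi> x \<noteq> 0} \<subseteq> \<Omega>" using closure_subset by (rule order_trans[rotated])
  then show "\<phi> x = 0" using x by auto
qed

lemma u_zero_outside: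
  fixes u :: "'a::euclidean_space \<Rightarrow> real"
  assumes u: "u \<in> X_s s \<sigma> \<Omega>" and op: "open \<Omega>"
  shows "AE x in lborel. x \<notin> \<Omega> \<longrightarrow> u x = 0"
proof -
  from u obtain \<phi> :: "nat \<Rightarrow> 'a \<Rightarrow> real" where um: "u \<in> borel_measurable lborel"
    and tf: "\<And>n. test_fun \<Omega> (\<phi> n)" and lim: "(\<lambda>n. X_normsq s \<sigma> (\<lambda>x. u x - \<phi> n x)) \<longlonglongrightarrow> 0"
    unfolding X_s_def mem_Collect_eq by (elim conjE exE) blast
  have mO: "\<Omega> \<in> sets borel" using op by auto
  have le: "(\<integral>\<^sup>+x. indicator (- \<Omega>) x * ennreal ((u x)\<^sup>2) \<partial>lborel) \<le> X_normsq s \<sigma> (\<lambda>x. u x - \<phi> n x)" for n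
  proof -
    have "(\<integral>\<^sup>+x. indicator (- \<Omega>) x * ennreal ((u x)\<^sup>2) \<partial>lborel) \<le> (\<integral>\<^sup>+x. ennreal ((u x - \<phi> n x)\<^sup>2) \<partial>lborel)"
      by (intro nn_integral_mono) (auto simp: indicator_def test_fun_zero[OF tf])
    also have "\<dots> \<le> X_normsq s \<sigma> (\<lambda>x. u x - \<phi> n x)"
      unfolding X_normsq_def by (rule add_increasing2) auto
    finally show ?thesis .
  qed
  have "(\<integral>\<^sup>+x. indicator (- \<Omega>) x * ennreal ((u x)\<^sup>2) \<partial>lborel) \<le> 0"
    using le by (intro LIMSEQ_le_const[OF lim] exI[of _ 0] allI impI)
  then have "(\<integral>\<^sup>+x. indicator (- \<Omega>) x * ennreal ((u x)\<^sup>2) \<partial>lborel) = 0" by simp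
  then have "AE x in lborel. indicator (- \<Omega>) x * ennreal ((u x)\<^sup>2) = 0"
  proof (subst (asm) nn_integral_0_iff_AE)
    show "(\<lambda>x. indicator (- \<Omega>) x * ennreal ((u x)\<^sup>2)) \<in> borel_measurable lborel"
      using um mO by measurable
  qed
  then show ?thesis by eventually_elim (auto simp: indicator_def)
qed

lemma inner_lower:
  fixes u :: "'a::euclidean_space \<Rightarrow> real"
  assumes um: "u \<in> borel_measurable lborel" and z: "AE x in lborel. x \<notin> \<Omega> \<longrightarrow> u x = 0"
    and bd: "bounded \<Omega>" and op: "open \<Omega>" and y: "norm y > diameter \<Omega>"
  shows "ennreal ((real ((2 * m) choose m))\<^sup>2) * (\<integral>\<^sup>+x. ennreal ((u x)\<^sup>2) \<partial>lborel)
          \<le> (\<integral>\<^sup>+x. ennreal ((delta_m m u x y)\<^sup>2) \<partial>lborel)"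
proof -
  define B where "B = real ((2 * m) choose m)"
  have mO: "\<Omega> \<in> sets borel" using op by auto
  have "AE x in lborel. \<forall>j\<in>{-int m..int m}. x + real_of_int j *\<^sub>R y \<notin> \<Omega> \<longrightarrow> u (x + real_of_int j *\<^sub>R y) = 0"
  proof (subst AE_finite_all)
    show "finite {-int m..int m}" by simp
    show "\<forall>j\<in>{-int m..int m}. AE x in lborel. x + real_of_int j *\<^sub>R y \<notin> \<Omega> \<longrightarrow> u (x + real_of_int j *\<^sub>R y) = 0"
    proof
      fix j :: int
      show "AE x in lborel. x + real_of_int j *\<^sub>R y \<notin> \<Omega> \<longrightarrow> u (x + real_of_int j *\<^sub>R y) = 0"
        using AE_lborel_shift[OF z, of "real_of_int j *\<^sub>R y"] .
    qed
  qed
  then have ae1: "AE x in lborel. indicator \<Omega> x * ennreal (B\<^sup>2 * (u x)\<^sup>2) \<le> ennreal ((delta_m m u x y)\<^sup>2)"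
  proof eventually_elim
    fix x assume h: "\<forall>j\<in>{-int m..int m}. x + real_of_int j *\<^sub>R y \<notin> \<Omega> \<longrightarrow> u (x + real_of_int j *\<^sub>R y) = 0"
    show "indicator \<Omega> x * ennreal (B\<^sup>2 * (u x)\<^sup>2) \<le> ennreal ((delta_m m u x y)\<^sup>2)"
    proof (cases "x \<in> \<Omega>")
      case True
      have "delta_m m u x y = B * u x"
        unfolding B_def
      proof (rule delta_single)
        fix j :: int assume j: "j \<in> {-int m..int m}" "j \<noteq> 0"
        have "x + real_of_int j *\<^sub>R y \<notin> \<Omega>"
        proof
          assume in2: "x + real_of_int j *\<^sub>R y \<in> \<Omega>"
          have "dist x (x + real_of_int j *\<^sub>R y) \<le> diameter \<Omega>"
            by (rule diameter_bounded_bound[OF bd True in2])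
          moreover have "dist x (x + real_of_int j *\<^sub>R y) = \<bar>real_of_int j\<bar> * norm y"
            by (simp add: dist_norm)
          moreover have "\<bar>real_of_int j\<bar> \<ge> 1" using j(2) by linarith
          then have "\<bar>real_of_int j\<bar> * norm y \<ge> norm y"
            by (simp add: mult_le_cancel_right1)
          ultimately show False using y by linarith
        qed
        then show "u (x + real_of_int j *\<^sub>R y) = 0" using h j by auto
      qed
      then show ?thesis using True by (simp add: power_mult_distrib)
    qed simp
  qed
  have ae2: "AE x in lborel. ennreal (B\<^sup>2 * (u x)\<^sup>2) = indicator \<Omega> x * ennreal (B\<^sup>2 * (u x)\<^sup>2)"
    using z by eventually_elim (auto simp: indicator_def)
  have "ennreal (B\<^sup>2) * (\<integral>\<^sup>+x. ennreal ((u x)\<^sup>2) \<partial>lborel) = (\<integral>\<^sup>+x. ennreal (B\<^sup>2) * ennreal ((u x)\<^sup>2) \<partial>lborel)"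
    by (rule nn_integral_cmult[symmetric]) (use um in measurable)
  also have "\<dots> = (\<integral>\<^sup>+x. ennreal (B\<^sup>2 * (u x)\<^sup>2) \<partial>lborel)"
    by (intro nn_integral_cong) (simp add: ennreal_mult)
  also have "\<dots> = (\<integral>\<^sup>+x. indicator \<Omega> x * ennreal (B\<^sup>2 * (u x)\<^sup>2) \<partial>lborel)"
    by (rule nn_integral_cong_AE[OF ae2])
  also have "\<dots> \<le> (\<integral>\<^sup>+x. ennreal ((delta_m m u x y)\<^sup>2) \<partial>lborel)"
    by (rule nn_integral_mono_AE[OF ae1])
  finally show ?thesis unfolding B_def .
qed


lemma c_lower:
  assumes sp: "sphere_prob (\<sigma>::'a::euclidean_space measure)" and s: "s > 0"
  shows "2 / (2 ^ (2 * s1 s) * Kc (2 * s1 s) s) \<le> c_ks (2 * s1 s) s \<sigma>"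
proof -
  define k where "k = 2 * s1 s"
  have kq: "real k > s" using s1_gt[OF s] s unfolding k_def by simp
  define I where "I = (\<integral>\<^sup>+y. ennreal ((1 - cos (e_s s \<sigma> \<bullet> y)) ^ k) \<partial>nu_s s \<sigma>)"
  have en: "norm (e_s s \<sigma>) = 1" using e_s_prop[OF sp s] by simp
  have I1: "I \<le> ennreal (Kc k s)" unfolding I_def by (rule I_le[OF sp s en kq])
  have I2: "I \<noteq> 0" unfolding I_def by (rule I_pos[OF sp s])
  have Kp: "Kc k s > 0" by (rule Kc_pos[OF s kq])
  from I1 obtain x where x: "I = ennreal x" "0 \<le> x"
    by (metis ennreal_cases ennreal_le_iff2 linorder_not_le top.not_eq_extremum top_greatest)
  have xK: "x \<le> Kc k s" using I1 x Kp by simp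
  have xp: "x > 0" using I2 x by (auto simp: order.order_iff_strict)
  have "c_ks k s \<sigma> = 2 / (2 ^ k * x)" unfolding c_ks_def I_def[symmetric] using x by simp
  also have "2 / (2 ^ k * Kc k s) \<le> 2 / (2 ^ k * x)"
    using xK xp by (intro divide_left_mono mult_left_mono mult_pos_pos) auto
  finally show ?thesis unfolding k_def by simp
qed

lemma Q_lower:
  fixes u :: "'a::euclidean_space \<Rightarrow> real"
  assumes sp: "sphere_prob (\<sigma>::'a measure)" and s: "s > 0"
    and um: "u \<in> borel_measurable lborel" and z: "AE x in lborel. x \<notin> \<Omega> \<longrightarrow> u x = 0"
    and bd: "bounded \<Omega>" and op: "open \<Omega>" and a: "a > diameter \<Omega>" "a > 0"
  shows "ennreal ((real ((2 * m) choose m))\<^sup>2) * (\<integral>\<^sup>+x. ennreal ((u x)\<^sup>2) \<partial>lborel) * ennreal (a powr (- 2 * s) / (2 * s))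
     \<le> (\<integral>\<^sup>+z. ennreal ((delta_m m u (fst z) (snd z))\<^sup>2) \<partial>(lborel \<Otimes>\<^sub>M nu_s s \<sigma>))"
proof -
  interpret N: sigma_finite_measure "nu_s s \<sigma>" by (rule nu_sigma_finite[OF s sp])
  interpret PS: pair_sigma_finite lborel "nu_s s \<sigma>"
    by (intro pair_sigma_finite.intro lborel.sigma_finite_measure_axioms N.sigma_finite_measure_axioms)
  define A where "A = ennreal ((real ((2 * m) choose m))\<^sup>2) * (\<integral>\<^sup>+x. ennreal ((u x)\<^sup>2) \<partial>lborel)"
  have ub: "u \<in> borel_measurable borel" using um by simp
  have md: "(\<lambda>z. ennreal ((delta_m m u (fst z) (snd z))\<^sup>2)) \<in> borel_measurable (lborel \<Otimes>\<^sub>M nu_s s \<sigma>)"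
    using delta_meas[OF ub, of m s \<sigma>] by measurable
  have S: "{y::'a. a \<le> norm y} \<in> sets (nu_s s \<sigma>)" by (simp add: nu_sets)
  have "A * ennreal (a powr (- 2 * s) / (2 * s)) \<le> A * emeasure (nu_s s \<sigma>) {y. a \<le> norm y}"
    by (intro mult_left_mono nu_tail_ge[OF s sp a(2)]) simp
  also have "\<dots> = (\<integral>\<^sup>+y. A * indicator {y. a \<le> norm y} y \<partial>nu_s s \<sigma>)"
    by (rule nn_integral_cmult_indicator[OF S, symmetric])
  also have "\<dots> \<le> (\<integral>\<^sup>+y. \<integral>\<^sup>+x. ennreal ((delta_m m u x y)\<^sup>2) \<partial>lborel \<partial>nu_s s \<sigma>)"
  proof (rule nn_integral_mono)
    fix y :: 'a
    show "A * indicator {y. a \<le> norm y} y \<le> (\<integral>\<^sup>+x. ennreal ((delta_m m u x y)\<^sup>2) \<partial>lborel)"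
    proof (cases "a \<le> norm y")
      case True
      then have "norm y > diameter \<Omega>" using a by linarith
      from inner_lower[OF um z bd op this, of m] True show ?thesis by (simp add: A_def)
    qed simp
  qed
  also have "\<dots> = (\<integral>\<^sup>+z. ennreal ((delta_m m u (fst z) (snd z))\<^sup>2) \<partial>(lborel \<Otimes>\<^sub>M nu_s s \<sigma>))"
    using PS.nn_integral_snd[OF md] by simp
  finally show ?thesis unfolding A_def .
qed

theorem proposition4p9:
  fixes s :: real and d :: real
  assumes "s > 0"
  shows "\<exists>C>0. \<forall>(\<sigma>::'a::euclidean_space measure) (\<Omega>::'a set).
            sphere_prob \<sigma> \<and> open \<Omega> \<and> bounded \<Omega> \<and> diameter \<Omega> = d \<longrightarrow>
            (\<forall>u\<in>X_s s \<sigma> \<Omega>.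
               (\<integral>x. (u x)\<^sup>2 \<partial>lborel) \<le> C * E_form s \<sigma> u u
             \<and> E_form s \<sigma> u u \<le> (\<integral>x. (u x)\<^sup>2 \<partial>lborel) + E_form s \<sigma> u u
             \<and> (\<integral>x. (u x)\<^sup>2 \<partial>lborel) + E_form s \<sigma> u u \<le> (1 + C) * E_form s \<sigma> u u
             \<and> (E_form s \<sigma> u u = 0 \<longrightarrow> (AE x in lborel. u x = 0)))"
proof -
  have s: "s > 0" by fact
  define m where "m = s1 s"
  define k where "k = 2 * m"
  define a where "a = max d 0 + 1"
  define B where "B = real ((2 * m) choose m)"
  define t where "t = a powr (- 2 * s) / (2 * s)"
  define c0 where "c0 = 2 / (2 ^ k * Kc k s)"
  define C where "C = 2 / (c0 * B\<^sup>2 * t)"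
  have kq: "real k > s" using s1_gt[OF s] s unfolding k_def m_def by simp
  have a0: "a > 0" unfolding a_def by simp
  have Bp: "B > 0" unfolding B_def by simp
  have tp: "t > 0" unfolding t_def using a0 s by simp
  have c0p: "c0 > 0" unfolding c0_def using Kc_pos[OF s kq] by simp
  have Cp: "C > 0" unfolding C_def using Bp tp c0p by simp
  show ?thesis
  proof (intro exI[of _ C] conjI[OF Cp] allI impI ballI)
    fix \<sigma> :: "'a measure" and \<Omega> :: "'a set" and u
    assume h: "sphere_prob \<sigma> \<and> open \<Omega> \<and> bounded \<Omega> \<and> diameter \<Omega> = d" and uX: "u \<in> X_s s \<sigma> \<Omega>"
    then have sp: "sphere_prob \<sigma>" and op: "open \<Omega>" and bd: "bounded \<Omega>" and dd: "diameter \<Omega> = d" by auto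
    define c where "c = c_ks (2 * s1 s) s \<sigma>"
    have cc0: "c0 \<le> c" unfolding c_def c0_def k_def m_def by (rule c_lower[OF sp s])
    have cp: "c > 0" using cc0 c0p by simp
    have um: "u \<in> borel_measurable lborel" and fin: "X_normsq s \<sigma> u < \<infinity>"
      using uX unfolding X_s_def by auto
    define U where "U = (\<integral>\<^sup>+x. ennreal ((u x)\<^sup>2) \<partial>lborel)"
    define Q where "Q = (\<integral>\<^sup>+z. ennreal ((delta_m m u (fst z) (snd z))\<^sup>2) \<partial>(lborel \<Otimes>\<^sub>M nu_s s \<sigma>))"
    have Efin: "E_energy s \<sigma> u < \<infinity>" and Ufin: "U < \<infinity>"
      using fin unfolding X_normsq_def U_def by (auto simp: top_unique)
    have EE: "E_energy s \<sigma> u = ennreal (c / 2) * Q"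
      unfolding E_energy_def Q_def c_def m_def by simp
    have Qfin: "Q < \<infinity>"
    proof (rule ccontr)
      assume "\<not> Q < \<infinity>"
      then have "Q = \<infinity>" using less_top[of Q] by simp
      then have "E_energy s \<sigma> u = \<infinity>" using EE cp by (simp add: ennreal_mult_top)
      with Efin show False by simp
    qed
    have ub: "u \<in> borel_measurable borel" using um by simp
    have md: "(\<lambda>z. (delta_m m u (fst z) (snd z))\<^sup>2) \<in> borel_measurable (lborel \<Otimes>\<^sub>M nu_s s \<sigma>)"
      using delta_meas[OF ub, of m s \<sigma>] by measurable
    have Eform: "E_form s \<sigma> u u = c / 2 * enn2real Q"
      unfolding E_form_def c_def Q_def m_def[symmetric]
      using integral_eq_nn_integral[OF md] by (simp add: power2_eq_square)
    have L2: "(\<integral>x. (u x)\<^sup>2 \<partial>lborel) = enn2real U"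
      unfolding U_def by (rule integral_eq_nn_integral) (use um in auto)
    have z: "AE x in lborel. x \<notin> \<Omega> \<longrightarrow> u x = 0" by (rule u_zero_outside[OF uX op])
    have ad: "a > diameter \<Omega>" unfolding a_def dd by simp
    have QL: "ennreal (B\<^sup>2) * U * ennreal t \<le> Q"
      unfolding B_def U_def t_def Q_def by (rule Q_lower[OF sp s um z bd op ad a0])
    have QL': "B\<^sup>2 * t * enn2real U \<le> enn2real Q"
    proof -
      have "ennreal (B\<^sup>2) * U * ennreal t = U * ennreal (B\<^sup>2 * t)"
        using Bp tp by (simp add: ennreal_mult mult_ac)
      then have "enn2real (ennreal (B\<^sup>2) * U * ennreal t) = enn2real U * (B\<^sup>2 * t)"
        using Bp tp by (simp add: enn2real_mult)
      moreover have "enn2real (ennreal (B\<^sup>2) * U * ennreal t) \<le> enn2real Q"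
        using QL Qfin by (intro enn2real_mono) auto
      ultimately show ?thesis by (simp add: mult_ac)
    qed
    have Qnn: "enn2real Q \<ge> 0" by simp
    have Unn: "enn2real U \<ge> 0" by simp
    have Enn: "E_form s \<sigma> u u \<ge> 0" unfolding Eform using cp by simp
    have main: "enn2real U \<le> C * (c / 2 * enn2real Q)"
    proof -
      have "enn2real U \<le> enn2real Q / (B\<^sup>2 * t)"
        using QL' Bp tp by (simp add: field_simps)
      also have "\<dots> = (c0 / 2 * enn2real Q) * C"
        unfolding C_def using c0p Bp tp by (simp add: field_simps)
      also have "\<dots> \<le> (c / 2 * enn2real Q) * C"
        using cc0 Qnn Cp by (intro mult_right_mono mult_right_mono) auto
      finally show ?thesis by (simp add: mult_ac)
    qed
    show "(\<integral>x. (u x)\<^sup>2 \<partial>lborel) \<le> C * E_form s \<sigma> u u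
             \<and> E_form s \<sigma> u u \<le> (\<integral>x. (u x)\<^sup>2 \<partial>lborel) + E_form s \<sigma> u u
             \<and> (\<integral>x. (u x)\<^sup>2 \<partial>lborel) + E_form s \<sigma> u u \<le> (1 + C) * E_form s \<sigma> u u
             \<and> (E_form s \<sigma> u u = 0 \<longrightarrow> (AE x in lborel. u x = 0))"
    proof (intro conjI)
    show "(\<integral>x. (u x)\<^sup>2 \<partial>lborel) \<le> C * E_form s \<sigma> u u"
      unfolding L2 Eform by (rule main)
    show "E_form s \<sigma> u u \<le> (\<integral>x. (u x)\<^sup>2 \<partial>lborel) + E_form s \<sigma> u u"
      unfolding L2 using Unn by simp
    show "(\<integral>x. (u x)\<^sup>2 \<partial>lborel) + E_form s \<sigma> u u \<le> (1 + C) * E_form s \<sigma> u u"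
      unfolding L2 Eform using main by (simp only: distrib_right mult_1_left)
    show "E_form s \<sigma> u u = 0 \<longrightarrow> (AE x in lborel. u x = 0)"
    proof
      assume "E_form s \<sigma> u u = 0"
      then have "C * (c / 2 * enn2real Q) = 0" unfolding Eform by simp
      then have "enn2real U \<le> 0" using main by (simp only:)
      then have "enn2real U = 0" using Unn by simp
      then have "U = 0" using Ufin by (auto simp: enn2real_eq_0_iff)
      then have "AE x in lborel. ennreal ((u x)\<^sup>2) = 0"
        unfolding U_def by (subst (asm) nn_integral_0_iff_AE) (use um in auto)
      then show "AE x in lborel. u x = 0" by eventually_elim simp
    qed
    qed
  qed
qed

end
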